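(* Under the standing setup, $0<\gamma_F<1$, $\|(A-LC)^k\|\le\kappa_F\gamma_F^k$ for every integer $k\ge0$, and $\|L\|\le\kappa_F$.
   Context: Standing setup. Consider the discrete-time LTI system $x_{t+1}=Ax_t+w_t$, $y_t=Cx_t+v_t$ ($t\ge0$) with $x_t\in\mathbb R^n$, $y_t\in\mathbb R^p$, $x_0=0$, $w_t\overset{iid}{\sim}\mathcal N(0,W)$, $v_t\overset{iid}{\sim}\mathcal N(0,V)$, the two noise sequences independent. Assume $(A,W^{1/2})$ is stabilizable and $(A,C)$ is detectable. Let $\Sigma\succeq0$ be the unique positive semidefinite solution of $\Sigma=A\Sigma A^\top-A\Sigma C^\top(C\Sigma C^\top+V)^{-1}C\Sigma A^\top+W$ and $L=A\Sigma C^\top(C\Sigma C^\top+V)^{-1}$. Known constants $\alpha_0,\alpha_1,\psi,\bar\sigma>0$ satisfy $\alpha_0I_n\preceq W\preceq\alpha_1I_n$, $\alpha_0I_p\preceq V\preceq\alpha_1I_p$, $\|C\|\le\psi$, $\|\Sigma\|\le\bar\sigma$. Set $\kappa_F=\sqrt{\bar\sigma/\alpha_0}$ and $\gamma_F=1-\frac{\alpha_0}{2\bar\sigma}$. $\|\cdot\|$ is the Euclidean/spectral norm and $\|\cdot\|_F$ the Frobenius norm. *)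

theory Defs
  imports "HOL-Analysis.Analysis"
begin

primrec mat_pow :: "real^'n^'n \<Rightarrow> nat \<Rightarrow> real^'n^'n" where
  "mat_pow M 0 = mat 1"
| "mat_pow M (Suc k) = M ** mat_pow M k"

definition spec_norm :: "real^'n^'m \<Rightarrow> real" where
  "spec_norm M = onorm (\<lambda>x. M *v x)"

definition psd :: "real^'n^'n \<Rightarrow> bool" where
  "psd M \<longleftrightarrow> transpose M = M \<and> (\<forall>x. 0 \<le> x \<bullet> (M *v x))"

definition loewner_le :: "real^'n^'n \<Rightarrow> real^'n^'n \<Rightarrow> bool" where
  "loewner_le M N \<longleftrightarrow> psd (N - M)"

definition cmat :: "real^'n^'m \<Rightarrow> complex^'n^'m" where
  "cmat M = (\<chi> i j. complex_of_real (M $ i $ j))"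

definition schur_stable :: "real^'n^'n \<Rightarrow> bool" where
  "schur_stable M \<longleftrightarrow>
     (\<forall>(c::complex) (v::complex^'n). v \<noteq> 0 \<and> cmat M *v v = c *s v \<longrightarrow> cmod c < 1)"

definition stabilizable :: "real^'n^'n \<Rightarrow> real^'m^'n \<Rightarrow> bool" where
  "stabilizable A B \<longleftrightarrow> (\<exists>K :: real^'n^'m. schur_stable (A + B ** K))"

definition detectable :: "real^'n^'n \<Rightarrow> real^'n^'p \<Rightarrow> bool" where
  "detectable A C \<longleftrightarrow> (\<exists>L :: real^'p^'n. schur_stable (A - L ** C))"

definition psd_sqrt :: "real^'n^'n \<Rightarrow> real^'n^'n" where
  "psd_sqrt W = (THE B. psd B \<and> B ** B = W)"

end

theory Submission
  imports Defs
begin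
declare transpose_matrix_vector[simp del] vector_transpose_matrix[simp del]

lemma dot_tr: "(x::real^'m) \<bullet> ((M::real^'n^'m) *v y) = (transpose M *v x) \<bullet> y"
  by (simp add: dot_lmul_matrix[symmetric] transpose_matrix_vector)

lemma scaleR_mv: "((c::real) *\<^sub>R (M::real^'n^'m)) *v x = c *\<^sub>R (M *v x)"
  by (simp add: vec_eq_iff matrix_vector_mult_def sum_distrib_left algebra_simps)

lemma mat1_scaleR_mv: "((c::real) *\<^sub>R mat 1) *v (x::real^'n) = c *\<^sub>R x"
  by (simp add: scaleR_mv)

lemma psd_quad: "psd M \<Longrightarrow> 0 \<le> x \<bullet> (M *v x)" by (simp add: psd_def)

lemma loewner_lo: "loewner_le (a *\<^sub>R mat 1) (M::real^'n^'n) \<Longrightarrow> a * (x \<bullet> x) \<le> x \<bullet> (M *v x)"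
  unfolding loewner_le_def psd_def
  by (auto simp: matrix_vector_mult_diff_rdistrib mat1_scaleR_mv inner_diff_right)

lemma inv_sym:
  fixes S Si :: "real^'n^'n"
  assumes "S ** Si = mat 1" "Si ** S = mat 1" "transpose S = S"
  shows "transpose Si = Si"
proof -
  have "transpose Si ** S = mat 1"
    by (metis assms(1,3) matrix_transpose_mul transpose_mat)
  then have "transpose Si = (transpose Si ** S) ** Si"
    by (metis assms(1) matrix_mul_assoc matrix_mul_rid)
  then show ?thesis using \<open>transpose Si ** S = mat 1\<close> by simp
qed

lemma spec_norm_mv: "norm ((M::real^'n^'m) *v x) \<le> spec_norm M * norm x"
  unfolding spec_norm_def by (rule onorm) simp

lemma spec_norm_by_transpose:
  fixes M :: "real^'n^'m"
  assumes "\<And>y. norm (transpose M *v y) \<le> c * norm y"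
  shows "spec_norm M \<le> c"
  unfolding spec_norm_def
proof (rule onorm_le)
  fix x
  have "norm (M *v x) ^ 2 = (M *v x) \<bullet> (M *v x)" by (simp add: power2_norm_eq_inner)
  also have "\<dots> = (transpose M *v (M *v x)) \<bullet> x" by (rule dot_tr)
  also have "\<dots> \<le> norm (transpose M *v (M *v x)) * norm x" by (rule Cauchy_Schwarz_ineq2[THEN order_trans[OF abs_ge_self]])
  also have "\<dots> \<le> c * norm (M *v x) * norm x" by (simp add: assms mult_right_mono)
  finally have h: "norm (M *v x) ^ 2 \<le> c * norm x * norm (M *v x)" by (simp add: algebra_simps)
  show "norm (M *v x) \<le> c * norm x"
  proof (cases "M *v x = 0")
    case True
    have "0 \<le> c * norm (axis undefined (1::real) :: real^'m)"
      using assms[of "axis undefined 1"] norm_ge_zero order_trans by blast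
    then have "0 \<le> c" by simp
    then have "0 \<le> c * norm x" by simp
    with True show ?thesis by simp
  next
    case False
    then have "norm (M *v x) > 0" by simp
    with h show ?thesis by (simp add: power2_eq_square mult_le_cancel_right)
  qed
qed
lemma transpose_add': "transpose ((X::real^'n^'m) + Y) = transpose X + transpose Y"
  by (simp add: transpose_def vec_eq_iff)
lemma transpose_diff': "transpose ((X::real^'n^'m) - Y) = transpose X - transpose Y"
  by (simp add: transpose_def vec_eq_iff)

lemma sq_to_norm: "0 \<le> b \<Longrightarrow> 0 \<le> a \<Longrightarrow> a^2 \<le> K * b^2 \<Longrightarrow> (a::real) \<le> sqrt K * b"
proof -
  assume h: "0 \<le> b" "0 \<le> a" "a^2 \<le> K * b^2"
  have "sqrt (a^2) \<le> sqrt (K * b^2)" by (rule real_sqrt_le_mono[OF h(3)])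
  then show ?thesis using h by (simp add: real_sqrt_mult)
qed

lemma quad_le_norm: "(y::real^'n) \<bullet> (M *v y) \<le> spec_norm M * (y \<bullet> y)"
proof -
  have "y \<bullet> (M *v y) \<le> norm y * norm (M *v y)" by (rule order_trans[OF abs_ge_self Cauchy_Schwarz_ineq2])
  also have "\<dots> \<le> norm y * (spec_norm M * norm y)" by (simp add: spec_norm_mv mult_left_mono)
  finally show ?thesis by (simp add: algebra_simps power2_norm_eq_inner[symmetric] power2_eq_square)
qed

theorem lemmaE4:
  fixes A W \<Sigma> :: "real^'n^'n" and C :: "real^'n^'p" and V :: "real^'p^'p"
    and L :: "real^'p^'n"
    and \<alpha>\<^sub>0 \<alpha>\<^sub>1 \<psi> \<sigma> :: real
  assumes W_psd: "psd W" and V_psd: "psd V"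
    and stab: "stabilizable A (psd_sqrt W)"
    and detect: "detectable A C"
    and Sigma_psd: "psd \<Sigma>"
    and DARE: "\<Sigma> = A ** \<Sigma> ** transpose A
        - A ** \<Sigma> ** transpose C ** matrix_inv (C ** \<Sigma> ** transpose C + V) ** C ** \<Sigma> ** transpose A
        + W"
    and L_def: "L = A ** \<Sigma> ** transpose C ** matrix_inv (C ** \<Sigma> ** transpose C + V)"
    and pos: "\<alpha>\<^sub>0 > 0" "\<alpha>\<^sub>1 > 0" "\<psi> > 0" "\<sigma> > 0"
    and W_lo: "loewner_le (\<alpha>\<^sub>0 *\<^sub>R mat 1) W" and W_hi: "loewner_le W (\<alpha>\<^sub>1 *\<^sub>R mat 1)"
    and V_lo: "loewner_le (\<alpha>\<^sub>0 *\<^sub>R mat 1) V" and V_hi: "loewner_le V (\<alpha>\<^sub>1 *\<^sub>R mat 1)"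
    and C_bd: "spec_norm C \<le> \<psi>"
    and Sigma_bd: "spec_norm \<Sigma> \<le> \<sigma>"
  shows "0 < 1 - \<alpha>\<^sub>0 / (2 * \<sigma>) \<and> 1 - \<alpha>\<^sub>0 / (2 * \<sigma>) < 1
    \<and> (\<forall>k::nat. spec_norm (mat_pow (A - L ** C) k) \<le> sqrt (\<sigma> / \<alpha>\<^sub>0) * (1 - \<alpha>\<^sub>0 / (2 * \<sigma>)) ^ k)
    \<and> spec_norm L \<le> sqrt (\<sigma> / \<alpha>\<^sub>0)"
proof -
  define S where "S = C ** \<Sigma> ** transpose C + V"
  define Si where "Si = matrix_inv S"
  define F where "F = A - L ** C"
  have Ssym: "transpose \<Sigma> = \<Sigma>" using Sigma_psd by (simp add: psd_def)
  have Vsym: "transpose V = V" using V_psd by (simp add: psd_def)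
  have Vq: "\<And>x. \<alpha>\<^sub>0 * (x \<bullet> x) \<le> x \<bullet> (V *v x)" using V_lo by (rule loewner_lo)
  have Wq: "\<And>x. \<alpha>\<^sub>0 * (x \<bullet> x) \<le> x \<bullet> (W *v x)" using W_lo by (rule loewner_lo)
  have Sq0: "\<And>x. 0 \<le> x \<bullet> (\<Sigma> *v x)" using Sigma_psd by (rule psd_quad)
  have S_quad_eq: "x \<bullet> (S *v x) = (transpose C *v x) \<bullet> (\<Sigma> *v (transpose C *v x)) + x \<bullet> (V *v x)" for x
    using dot_tr[of x C "\<Sigma> *v (transpose C *v x)"]
    by (simp add: S_def matrix_vector_mult_add_rdistrib matrix_vector_mul_assoc[symmetric] inner_add_right)
  have S_quad: "\<alpha>\<^sub>0 * (x \<bullet> x) \<le> x \<bullet> (S *v x)" for x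
    using S_quad_eq[of x] Sq0[of "transpose C *v x"] Vq[of x] by linarith
  have "invertible S"
    unfolding invertible_left_inverse matrix_left_invertible_ker
  proof (intro allI impI)
    fix x assume "S *v x = 0"
    then have "\<alpha>\<^sub>0 * (x \<bullet> x) \<le> 0" using S_quad[of x] by simp
    then have "x \<bullet> x \<le> 0" using pos(1) by (simp add: mult_le_0_iff)
    then show "x = 0" by (metis inner_eq_zero_iff inner_ge_zero order_antisym)
  qed
  then have SSi: "S ** Si = mat 1 \<and> Si ** S = mat 1"
    unfolding Si_def matrix_inv_def invertible_def by (rule someI_ex)
  have SsymS: "transpose S = S"
    by (simp add: S_def transpose_add' matrix_transpose_mul Ssym Vsym matrix_mul_assoc)
  have Sisym: "transpose Si = Si" using SSi SsymS inv_sym by blast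
  have L_eq: "L = A ** \<Sigma> ** transpose C ** Si" using L_def S_def Si_def by simp
  have TL: "transpose L *v y = Si *v (C *v (\<Sigma> *v (transpose A *v y)))" for y
    by (simp add: L_eq matrix_transpose_mul Sisym Ssym matrix_vector_mul_assoc[symmetric])
  have TF: "transpose F *v y = transpose A *v y - transpose C *v (transpose L *v y)" for y
    by (simp add: F_def transpose_diff' matrix_transpose_mul matrix_vector_mult_diff_rdistrib matrix_vector_mul_assoc[symmetric])
  have DARE': "\<Sigma> = A ** \<Sigma> ** transpose A - A ** \<Sigma> ** transpose C ** Si ** C ** \<Sigma> ** transpose A + W"
    using DARE unfolding S_def Si_def .
  have Sig_mv: "\<Sigma> *v y = A *v (\<Sigma> *v (transpose A *v y))
      - A *v (\<Sigma> *v (transpose C *v (Si *v (C *v (\<Sigma> *v (transpose A *v y)))))) + W *v y" for y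
  proof -
    have "\<Sigma> *v y = (A ** \<Sigma> ** transpose A - A ** \<Sigma> ** transpose C ** Si ** C ** \<Sigma> ** transpose A + W) *v y"
      by (rule arg_cong[where f="\<lambda>M. M *v y", OF DARE'])
    then show ?thesis
      by (simp add: matrix_vector_mult_add_rdistrib matrix_vector_mult_diff_rdistrib matrix_vector_mul_assoc[symmetric])
  qed
  have key: "y \<bullet> (\<Sigma> *v y) = (transpose F *v y) \<bullet> (\<Sigma> *v (transpose F *v y))
      + (transpose L *v y) \<bullet> (V *v (transpose L *v y)) + y \<bullet> (W *v y)" for y
  proof -
    define a where "a = transpose A *v y"
    define c where "c = C *v (\<Sigma> *v a)"
    define w where "w = Si *v c"
    have TLw: "transpose L *v y = w" by (simp add: TL w_def c_def a_def)
    have TFw: "transpose F *v y = a - transpose C *v w" by (simp add: TF TLw a_def)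
    have f1: "y \<bullet> (\<Sigma> *v y) = a \<bullet> (\<Sigma> *v a) - c \<bullet> w + y \<bullet> (W *v y)"
    proof -
      have "y \<bullet> (\<Sigma> *v y) = a \<bullet> (\<Sigma> *v a) - a \<bullet> (\<Sigma> *v (transpose C *v w)) + y \<bullet> (W *v y)"
        using dot_tr[of y A "\<Sigma> *v a"] dot_tr[of y A "\<Sigma> *v (transpose C *v w)"]
        by (simp add: Sig_mv[of y] inner_add_right inner_diff_right a_def[symmetric] c_def[symmetric] w_def[symmetric])
      moreover have "a \<bullet> (\<Sigma> *v (transpose C *v w)) = c \<bullet> w"
        using dot_tr[of a \<Sigma> "transpose C *v w"] dot_tr[of w C "\<Sigma> *v a"] Ssym
        by (simp add: c_def inner_commute)
      ultimately show ?thesis by simp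
    qed
    have f2: "(transpose C *v w) \<bullet> (\<Sigma> *v a) = w \<bullet> c"
      using dot_tr[of w C "\<Sigma> *v a"] by (simp add: c_def)
    have f3: "a \<bullet> (\<Sigma> *v (transpose C *v w)) = w \<bullet> c"
      using dot_tr[of a \<Sigma> "transpose C *v w"] f2 Ssym by (simp add: inner_commute)
    have f5: "S *v w = c" using SSi by (simp add: w_def matrix_vector_mul_assoc)
    have f4: "w \<bullet> c = (transpose C *v w) \<bullet> (\<Sigma> *v (transpose C *v w)) + w \<bullet> (V *v w)"
      using S_quad_eq[of w] f5 by simp
    have f6: "(a - transpose C *v w) \<bullet> (\<Sigma> *v (a - transpose C *v w))
       = a \<bullet> (\<Sigma> *v a) - a \<bullet> (\<Sigma> *v (transpose C *v w)) - (transpose C *v w) \<bullet> (\<Sigma> *v a)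
         + (transpose C *v w) \<bullet> (\<Sigma> *v (transpose C *v w))"
      by (simp add: matrix_vector_mult_diff_distrib inner_diff_left inner_diff_right)
    show ?thesis using f1 f2 f3 f4 f6 TLw TFw by (simp add: inner_commute)
  qed
  have Sq_up: "y \<bullet> (\<Sigma> *v y) \<le> \<sigma> * (y \<bullet> y)" for y
  proof -
    have "spec_norm \<Sigma> * (y \<bullet> y) \<le> \<sigma> * (y \<bullet> y)" by (rule mult_right_mono[OF Sigma_bd]) simp
    then show ?thesis using quad_le_norm[of y \<Sigma>] by linarith
  qed
  have Sq_lo: "\<alpha>\<^sub>0 * (y \<bullet> y) + \<alpha>\<^sub>0 * ((transpose L *v y) \<bullet> (transpose L *v y)) \<le> y \<bullet> (\<Sigma> *v y)" for y
    using key[of y] Sq0[of "transpose F *v y"] Vq[of "transpose L *v y"] Wq[of y] by linarith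
  have a_le_s: "\<alpha>\<^sub>0 \<le> \<sigma>"
  proof -
    define e :: "real^'n" where "e = axis undefined 1"
    have "e \<bullet> e = 1" by (simp add: e_def inner_axis_axis)
    moreover have "0 \<le> \<alpha>\<^sub>0 * ((transpose L *v e) \<bullet> (transpose L *v e))" by (rule mult_nonneg_nonneg[OF less_imp_le[OF pos(1)] inner_ge_zero])
    then have "\<alpha>\<^sub>0 * (e \<bullet> e) \<le> \<sigma> * (e \<bullet> e)" using Sq_lo[of e] Sq_up[of e] by linarith
    with \<open>e \<bullet> e = 1\<close> show ?thesis by simp
  qed
  define g where "g = 1 - \<alpha>\<^sub>0 / (2 * \<sigma>)"
  define r where "r = 1 - \<alpha>\<^sub>0 / \<sigma>"
  have g01: "0 < g \<and> g < 1"
    using a_le_s pos by (simp add: g_def field_simps)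
  have r0: "0 \<le> r" using a_le_s pos by (simp add: r_def field_simps)
  have rg: "r \<le> g^2"
  proof -
    have "g^2 = r + (\<alpha>\<^sub>0 / (2 * \<sigma>))^2" using pos by (simp add: g_def r_def power2_eq_square field_simps)
    then show ?thesis by simp
  qed
  have Lb: "spec_norm L \<le> sqrt (\<sigma> / \<alpha>\<^sub>0)"
  proof (rule spec_norm_by_transpose)
    fix y
    have "\<alpha>\<^sub>0 * ((transpose L *v y) \<bullet> (transpose L *v y)) \<le> \<sigma> * (y \<bullet> y)"
    proof -
      have "0 \<le> \<alpha>\<^sub>0 * (y \<bullet> y)" by (rule mult_nonneg_nonneg[OF less_imp_le[OF pos(1)] inner_ge_zero])
      then show ?thesis using Sq_lo[of y] Sq_up[of y] by linarith
    qed
    then have "\<alpha>\<^sub>0 * (norm (transpose L *v y))^2 \<le> \<alpha>\<^sub>0 * ((\<sigma> / \<alpha>\<^sub>0) * (norm y)^2)"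
      using pos(1) by (simp add: power2_norm_eq_inner)
    then have "(norm (transpose L *v y))^2 \<le> (\<sigma> / \<alpha>\<^sub>0) * (norm y)^2"
      by (simp only: mult_le_cancel_left_pos[OF pos(1)])
    then show "norm (transpose L *v y) \<le> sqrt (\<sigma> / \<alpha>\<^sub>0) * norm y"
      by (rule sq_to_norm[rotated 2]) simp_all
  qed
  have nn: "0 \<le> \<alpha>\<^sub>0 * (z \<bullet> z)" for z :: "real^'n" by (rule mult_nonneg_nonneg[OF less_imp_le[OF pos(1)] inner_ge_zero])
  have nnp: "0 \<le> \<alpha>\<^sub>0 * (z \<bullet> z)" for z :: "real^'p" by (rule mult_nonneg_nonneg[OF less_imp_le[OF pos(1)] inner_ge_zero])
  have qF: "(transpose F *v y) \<bullet> (\<Sigma> *v (transpose F *v y)) \<le> r * (y \<bullet> (\<Sigma> *v y))" for y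
  proof -
    have h1: "(transpose F *v y) \<bullet> (\<Sigma> *v (transpose F *v y)) \<le> y \<bullet> (\<Sigma> *v y) - \<alpha>\<^sub>0 * (y \<bullet> y)"
      using key[of y] Vq[of "transpose L *v y"] Wq[of y] nnp[of "transpose L *v y"] by linarith
    have h2: "(\<alpha>\<^sub>0 / \<sigma>) * (y \<bullet> (\<Sigma> *v y)) \<le> (\<alpha>\<^sub>0 / \<sigma>) * (\<sigma> * (y \<bullet> y))"
      by (rule mult_left_mono[OF Sq_up]) (use pos in simp)
    have h3: "(\<alpha>\<^sub>0 / \<sigma>) * (\<sigma> * (y \<bullet> y)) = \<alpha>\<^sub>0 * (y \<bullet> y)" using pos by simp
    have h4: "r * (y \<bullet> (\<Sigma> *v y)) = y \<bullet> (\<Sigma> *v y) - (\<alpha>\<^sub>0 / \<sigma>) * (y \<bullet> (\<Sigma> *v y))"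
      by (simp add: r_def algebra_simps)
    show ?thesis using h1 h2 h3 h4 by linarith
  qed
  have TP: "transpose (mat_pow F (Suc k)) *v y = transpose (mat_pow F k) *v (transpose F *v y)" for k y
    by (simp add: matrix_transpose_mul matrix_vector_mul_assoc[symmetric])
  have qP: "\<forall>y. (transpose (mat_pow F k) *v y) \<bullet> (\<Sigma> *v (transpose (mat_pow F k) *v y)) \<le> r^k * (y \<bullet> (\<Sigma> *v y))" for k
  proof (induction k)
    case 0
    then show ?case by simp
  next
    case (Suc k)
    show ?case
    proof
      fix y
      have "(transpose (mat_pow F (Suc k)) *v y) \<bullet> (\<Sigma> *v (transpose (mat_pow F (Suc k)) *v y))
          = (transpose (mat_pow F k) *v (transpose F *v y)) \<bullet> (\<Sigma> *v (transpose (mat_pow F k) *v (transpose F *v y)))"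
        by (simp only: TP)
      also have "\<dots> \<le> r^k * ((transpose F *v y) \<bullet> (\<Sigma> *v (transpose F *v y)))"
        using Suc.IH by blast
      also have "\<dots> \<le> r^k * (r * (y \<bullet> (\<Sigma> *v y)))"
        by (rule mult_left_mono[OF qF]) (simp add: r0)
      also have "\<dots> = r^(Suc k) * (y \<bullet> (\<Sigma> *v y))" by simp
      finally show "(transpose (mat_pow F (Suc k)) *v y) \<bullet> (\<Sigma> *v (transpose (mat_pow F (Suc k)) *v y))
          \<le> r^(Suc k) * (y \<bullet> (\<Sigma> *v y))" .
    qed
  qed
  have Pb: "spec_norm (mat_pow F k) \<le> sqrt (\<sigma> / \<alpha>\<^sub>0) * g ^ k" for k
  proof (rule spec_norm_by_transpose)
    fix y
    define z where "z = transpose (mat_pow F k) *v y"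
    have e1: "(g^2)^k = (g^k)^2" by (simp only: power_mult[symmetric] mult.commute)
    have "\<alpha>\<^sub>0 * (z \<bullet> z) \<le> z \<bullet> (\<Sigma> *v z)"
      using Sq_lo[of z] nnp[of "transpose L *v z"] by linarith
    also have "\<dots> \<le> r^k * (y \<bullet> (\<Sigma> *v y))" using spec[OF qP[of k], of y] unfolding z_def .
    also have "\<dots> \<le> r^k * (\<sigma> * (y \<bullet> y))"
      by (rule mult_left_mono[OF Sq_up zero_le_power[OF r0]])
    also have "\<dots> \<le> (g^2)^k * (\<sigma> * (y \<bullet> y))"
      by (rule mult_right_mono[OF power_mono[OF rg r0] mult_nonneg_nonneg[OF less_imp_le[OF pos(4)] inner_ge_zero]])
    also have "\<dots> = \<alpha>\<^sub>0 * (((\<sigma> / \<alpha>\<^sub>0) * (g^k)^2) * (y \<bullet> y))"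
      unfolding e1 using pos(1) by (simp add: field_simps)
    finally have "\<alpha>\<^sub>0 * (z \<bullet> z) \<le> \<alpha>\<^sub>0 * (((\<sigma> / \<alpha>\<^sub>0) * (g^k)^2) * (y \<bullet> y))" .
    then have "z \<bullet> z \<le> ((\<sigma> / \<alpha>\<^sub>0) * (g^k)^2) * (y \<bullet> y)"
      by (simp only: mult_le_cancel_left_pos[OF pos(1)])
    then have "(norm z)^2 \<le> ((\<sigma> / \<alpha>\<^sub>0) * (g^k)^2) * (norm y)^2"
      by (simp only: power2_norm_eq_inner)
    then have "norm z \<le> sqrt ((\<sigma> / \<alpha>\<^sub>0) * (g^k)^2) * norm y"
      by (rule sq_to_norm[rotated 2]) simp_all
    also have "sqrt ((\<sigma> / \<alpha>\<^sub>0) * (g^k)^2) = sqrt (\<sigma> / \<alpha>\<^sub>0) * g^k"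
      using g01 by (subst real_sqrt_mult) simp
    finally show "norm (transpose (mat_pow F k) *v y) \<le> sqrt (\<sigma> / \<alpha>\<^sub>0) * g ^ k * norm y"
      by (simp only: z_def)
  qed
  have "\<forall>k. spec_norm (mat_pow (A - L ** C) k) \<le> sqrt (\<sigma> / \<alpha>\<^sub>0) * g ^ k"
    using Pb unfolding F_def by blast
  then show ?thesis using g01 Lb unfolding g_def by blast
qed

end
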